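(* Let $t\geq 3$ and let $(a_1,\dots,a_t,n_1,n_2)$ be integers with $a_1\geq\cdots\geq a_t\geq 2$, $n_1\geq n_2\geq 2$, $a_l\neq n_j$ for all $l,j$, and $\prod_{l=1}^t a_l!=n_1!n_2!$. Suppose $n_1>a_1$ and $n_2>a_i$ for some $2\leq i\leq t$. Put $m_1=a_1+1$, $k_1=n_1-a_1$, $m_2=a_i+1$, $k_2=n_2-a_i$, and $\Delta(m,k)=m(m+1)\cdots(m+k-1)$, so that $\prod_{l\neq 1,i}a_l!=\Delta(m_1,k_1)\Delta(m_2,k_2)$. Then: (i) none of the integers $m_1,m_1+1,\dots,m_1+k_1-1$ is a prime; (ii) with $a=\max_{l\neq 1,i}a_l$, one has $$a\log(a)-a\leq\log(a!)\leq (k_1+k_2)\log(2m_1).$$ *)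

theory Defs
  imports Complex_Main "HOL-Computational_Algebra.Primes"
begin

definition Delta :: "nat \<Rightarrow> nat \<Rightarrow> nat" where
  "Delta m k = (\<Prod>j<k. m + j)"

end

theory Submission
  imports Defs
begin


lemma mult_fact_sum:
  fixes p :: nat
  assumes p: "prime p" and nN: "n \<le> N"
  shows "multiplicity p (fact n :: nat) = (\<Sum>i\<in>{1..N}. n div p ^ i)"
  using nN
proof (induction n)
  case 0
  then show ?case by simp
next
  case (Suc n)
  have IH: "multiplicity p (fact n :: nat) = (\<Sum>i\<in>{1..N}. n div p ^ i)"
    using Suc by simp
  have A: "multiplicity p (fact (Suc n) :: nat) = multiplicity p (Suc n) + multiplicity p (fact n :: nat)"
    unfolding fact_Suc of_nat_id
    by (rule prime_elem_multiplicity_mult_distrib) (use p in auto)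
  have B: "multiplicity p (Suc n) = card {i\<in>{1..N}. p ^ i dvd Suc n}"
  proof -
    let ?m = "multiplicity p (Suc n)"
    have nu: "\<not> is_unit p" using p not_prime_unit by blast
    have iff: "p ^ i dvd Suc n \<longleftrightarrow> i \<le> ?m" for i
      by (rule power_dvd_iff_le_multiplicity) (simp, fact nu)
    have "p ^ ?m dvd Suc n" by (rule multiplicity_dvd)
    then have le1: "p ^ ?m \<le> Suc n" by (rule dvd_imp_le) simp
    have "?m < 2 ^ ?m" by (rule less_exp)
    also have "2 ^ ?m \<le> p ^ ?m" by (rule power_mono) (use prime_ge_2_nat[OF p] in simp_all)
    finally have "?m < p ^ ?m" .
    then have "?m \<le> N" using Suc.prems le1 by linarith
    have "{i\<in>{1..N}. p ^ i dvd Suc n} = {1..?m}"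
    proof (rule set_eqI)
      fix i
      show "i \<in> {i\<in>{1..N}. p ^ i dvd Suc n} \<longleftrightarrow> i \<in> {1..?m}"
        unfolding iff using \<open>?m \<le> N\<close> by auto
    qed
    then show ?thesis by simp
  qed
  have C: "card {i\<in>{1..N}. p ^ i dvd Suc n} = (\<Sum>i\<in>{1..N}. if p ^ i dvd Suc n then 1 else 0)"
  proof -
    have "card {i\<in>{1..N}. p ^ i dvd Suc n} = (\<Sum>i\<in>{i\<in>{1..N}. p ^ i dvd Suc n}. 1)" by simp
    also have "\<dots> = (\<Sum>i\<in>{1..N}. if p ^ i dvd Suc n then 1 else 0)"
      by (rule sum.inter_filter) simp
    finally show ?thesis .
  qed
  have "multiplicity p (fact (Suc n) :: nat) =
      (\<Sum>i\<in>{1..N}. (if p ^ i dvd Suc n then 1 else 0) + n div p ^ i)"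
    unfolding A B C IH by (rule sum.distrib[symmetric])
  also have "\<dots> = (\<Sum>i\<in>{1..N}. Suc n div p ^ i)"
  proof (rule sum.cong)
    fix i
    show "(if p ^ i dvd Suc n then 1 else 0) + n div p ^ i = Suc n div p ^ i"
      by (simp only: div_Suc dvd_eq_mod_eq_0) simp
  qed simp
  finally show ?case .
qed

lemma div_double:
  fixes n q :: nat
  shows "2 * (n div q) \<le> 2 * n div q \<and> 2 * n div q \<le> 2 * (n div q) + 1"
proof (cases "q = 0")
  case True then show ?thesis by simp
next
  case False
  have e0: "n = n mod q + (n div q) * q" by simp
  have e: "2 * n = 2 * (n mod q) + (2 * (n div q)) * q"
    using arg_cong[OF e0, of "\<lambda>x. 2*x"] by (simp only: distrib_left mult.assoc)
  have "2 * (n mod q) < 2 * q" using False by simp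
  then have "2 * (n mod q) div q \<le> 1"
    by (metis False bot_nat_0.not_eq_extremum div_less_iff_less_mult less_Suc_eq_le mult.commute one_add_one plus_1_eq_Suc)
  have "2 * n div q = 2 * (n div q) + 2 * (n mod q) div q"
    using e False by (metis div_mult_self1 add.commute)
  then show ?thesis using \<open>2 * (n mod q) div q \<le> 1\<close> by simp
qed

lemma mult_central:
  fixes p :: nat
  assumes p: "prime p"
  shows "multiplicity p ((2*n) choose n) = (\<Sum>i\<in>{1..2*n}. 2*n div p^i - 2 * (n div p^i))"
proof -
  have f: "fact (2*n) = (fact n * fact n * ((2*n) choose n) :: nat)"
    using binomial_fact_lemma[of n "2*n"] by (simp add: mult_2 algebra_simps)
  have "multiplicity p (fact (2*n) :: nat) = multiplicity p (fact n :: nat) + multiplicity p (fact n :: nat)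
      + multiplicity p ((2*n) choose n)"
    unfolding f using p
    by (simp add: prime_elem_multiplicity_mult_distrib)
  then have "multiplicity p ((2*n) choose n) + 2 * (\<Sum>i\<in>{1..2*n}. n div p^i) = (\<Sum>i\<in>{1..2*n}. 2*n div p^i)"
    using mult_fact_sum[OF p, of n "2*n"] mult_fact_sum[OF p, of "2*n" "2*n"] by simp
  moreover have "(\<Sum>i\<in>{1..2*n}. 2*n div p^i) = (\<Sum>i\<in>{1..2*n}. 2*n div p^i - 2 * (n div p^i)) + 2 * (\<Sum>i\<in>{1..2*n}. n div p^i)"
    by (simp add: sum.distrib[symmetric] sum_distrib_left div_double)
  ultimately show ?thesis by simp
qed

lemma mult_central_bound:
  fixes p :: nat
  assumes p: "prime p" and n: "n > 0"
  shows "p ^ multiplicity p ((2*n) choose n) \<le> 2 * n"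
proof (rule ccontr)
  let ?m = "multiplicity p ((2*n) choose n)"
  let ?t = "\<lambda>i. 2*n div p^i - 2 * (n div p^i)"
  assume "\<not> ?thesis"
  then have big: "2 * n < p ^ ?m" by simp
  have t1: "?t i \<le> 1" for i using div_double[of n "p^i"] by linarith
  have t0: "?t i = 0" if "i \<ge> ?m" for i
  proof -
    have "p ^ ?m \<le> p ^ i" using that prime_gt_1_nat[OF p] by (simp add: power_increasing)
    then have "2 * n < p ^ i" using big by linarith
    then show ?thesis by simp
  qed
  have "?m = (\<Sum>i\<in>{1..2*n}. ?t i)" by (rule mult_central[OF p])
  also have "\<dots> = (\<Sum>i\<in>{1..2*n} \<inter> {..<?m}. ?t i)"
  proof (rule sum.mono_neutral_right)
    show "\<forall>i\<in>{1..2 * n} - {1..2 * n} \<inter> {..<?m}. ?t i = 0"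
    proof
      fix i assume "i \<in> {1..2 * n} - {1..2 * n} \<inter> {..<?m}"
      then have "?m \<le> i" by auto
      then show "?t i = 0" by (rule t0)
    qed
  qed auto
  also have "\<dots> \<le> (\<Sum>i\<in>{1..2*n} \<inter> {..<?m}. 1)"
    by (rule sum_mono) (rule t1)
  also have "\<dots> = card ({1..2*n} \<inter> {..<?m})" by simp
  also have "\<dots> \<le> card ({1..<?m})"
    by (rule card_mono) auto
  also have "\<dots> < ?m" using big n by (cases ?m) auto
  finally show False by simp
qed

lemma mult_central_zero:
  fixes p :: nat
  assumes p: "prime p" and "p \<le> n" and "2 * n < 3 * p" and "3 \<le> n"
  shows "multiplicity p ((2*n) choose n) = 0"
proof -
  have p3: "p \<ge> 3"
  proof (rule ccontr)
    assume "\<not> p \<ge> 3"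
    then have "p \<le> 2" by simp
    then show False using assms(2,3,4) by linarith
  qed
  have "(\<Sum>i\<in>{1..2*n}. 2*n div p^i - 2 * (n div p^i)) = (\<Sum>i\<in>{1..2*n}. 0)"
  proof (rule sum.cong)
    fix i assume i: "i \<in> {1..2*n}"
    show "2*n div p^i - 2 * (n div p^i) = 0"
    proof (cases "i = 1")
      case True
      have "n div p = 1"
      proof -
        have "p * 1 \<le> n" using assms by simp
        moreover have "n < p * Suc 1" using assms by simp
        ultimately show ?thesis by (rule div_nat_eqI)
      qed
      have "2*n div p = 2"
      proof -
        have "p * 2 \<le> 2*n" using assms by simp
        moreover have "2*n < p * Suc 2" using assms by simp
        ultimately show ?thesis by (rule div_nat_eqI)
      qed
      show ?thesis using True \<open>n div p = 1\<close> \<open>2*n div p = 2\<close> by simp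
    next
      case False
      then have "i \<ge> 2" using i by simp
      have "3 * p \<le> p * p" using p3 by simp
      also have "\<dots> = p^2" by (simp add: power2_eq_square)
      also have "\<dots> \<le> p^i" using \<open>i \<ge> 2\<close> prime_gt_1_nat[OF p] by (simp add: power_increasing)
      finally have "2*n < p^i" using assms(3) by linarith
      then show ?thesis by simp
    qed
  qed simp
  then show ?thesis using mult_central[OF p] by simp
qed



lemma prod_primes_dvd:
  fixes x :: nat
  assumes "finite A" "\<forall>p\<in>A. prime p" "\<forall>p\<in>A. p dvd x"
  shows "\<Prod>A dvd x"
  using assms
proof (induction A rule: finite_induct)
  case empty then show ?case by simp
next
  case (insert a A)
  have pa: "prime a" using insert.prems by simp
  have "\<not> a dvd \<Prod>A"
  proof
    assume "a dvd \<Prod>A"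
    then obtain q where q: "q \<in> A" "a dvd q" using prime_dvd_prod_iff[OF insert.hyps(1) pa] by auto
    then have "prime q" using insert.prems by simp
    then have "a = q" using q(2) pa primes_dvd_imp_eq by blast
    then show False using q(1) insert.hyps(2) by simp
  qed
  then have cop: "coprime a (\<Prod>A)" using pa prime_imp_coprime by blast
  have "\<Prod>A dvd x" using insert by simp
  moreover have "a dvd x" using insert.prems by simp
  ultimately have "a * \<Prod>A dvd x" using cop by (simp add: divides_mult)
  then show ?case using insert.hyps by simp
qed

lemma choose_odd_le: "((2*k+1) choose k) \<le> (4::nat) ^ k"
proof -
  have "((2*k+1) choose k) \<le> (\<Sum>i\<le>k. (2*k+1) choose i)"
    by (rule member_le_sum) auto
  also have "\<dots> = 2 ^ (2 * k)" by (rule binomial_r_part_sum)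
  also have "\<dots> = 4 ^ k" by (simp add: power_mult)
  finally show ?thesis .
qed

lemma primorial_le: "(\<Prod>{p::nat. prime p \<and> p \<le> m}) \<le> 4 ^ m"
proof (induction m rule: less_induct)
  case (less m)
  show ?case
  proof (cases "m \<le> 2")
    case True
    then have "{p::nat. prime p \<and> p \<le> m} \<subseteq> {2}"
    proof -
      have "p = 2" if "prime p" "p \<le> m" for p :: nat
        using prime_ge_2_nat[OF that(1)] that(2) True by linarith
      then show ?thesis by blast
    qed
    then have "\<Prod>{p::nat. prime p \<and> p \<le> m} dvd \<Prod>{2::nat}"
      by (intro prod_dvd_prod_subset) auto
    then have le2: "\<Prod>{p::nat. prime p \<and> p \<le> m} \<le> 2" by (auto dest: dvd_imp_le)
    have m0: "{p::nat. prime p \<and> p \<le> m} = {}" if "m = 0"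
    proof -
      have "\<not> (prime p \<and> p \<le> m)" for p :: nat
        using prime_ge_2_nat[of p] that by auto
      then show ?thesis by blast
    qed
    show ?thesis
    proof (cases "m = 0")
      case True show ?thesis unfolding m0[OF True] by simp
    next
      case False
      then have "(2::nat) \<le> 4 ^ m" by (cases m) auto
      then show ?thesis using le2 by linarith
    qed
  next
    case False
    then have m2: "m > 2" by simp
    show ?thesis
    proof (cases "even m")
      case True
      have eq: "{p::nat. prime p \<and> p \<le> m} = {p::nat. prime p \<and> p \<le> m - 1}"
      proof -
        have "\<not> prime m" using True m2 prime_odd_nat by blast
        then have "prime p \<and> p \<le> m \<longleftrightarrow> prime p \<and> p \<le> m - 1" for p
          by (cases "p = m") auto
        then show ?thesis by blast
      qed
      have i1: "(\<Prod>{p::nat. prime p \<and> p \<le> m - 1}) \<le> 4 ^ (m - 1)"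
        using less.IH[of "m - 1"] m2 by simp
      have i2: "(4::nat) ^ (m - 1) \<le> 4 ^ m" by (rule power_increasing) auto
      show ?thesis unfolding eq using i1 i2 by (rule order_trans)
    next
      case False
      then obtain k where k: "m = 2 * k + 1" by (metis oddE)
      have k1: "k \<ge> 1" using m2 k by simp
      define S1 where "S1 = {p::nat. prime p \<and> p \<le> k + 1}"
      define S2 where "S2 = {p::nat. prime p \<and> k + 1 < p \<and> p \<le> 2 * k + 1}"
      have fin1: "finite S1" unfolding S1_def by (rule finite_subset[of _ "{..k+1}"]) auto
      have fin2: "finite S2" unfolding S2_def by (rule finite_subset[of _ "{..2*k+1}"]) auto
      have un: "{p::nat. prime p \<and> p \<le> m} = S1 \<union> S2" unfolding S1_def S2_def k by auto
      have dis: "S1 \<inter> S2 = {}" unfolding S1_def S2_def by auto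
      have "\<Prod>{p::nat. prime p \<and> p \<le> m} = \<Prod>S1 * \<Prod>S2"
        unfolding un by (rule prod.union_disjoint[OF fin1 fin2 dis])
      moreover have "\<Prod>S1 \<le> 4 ^ (k + 1)"
        unfolding S1_def using less.IH[of "k+1"] k k1 by simp
      moreover have "\<Prod>S2 \<le> 4 ^ k"
      proof -
        have fl: "fact k * fact (k+1) * ((2*k+1) choose k) = (fact (2*k+1) :: nat)"
          using binomial_fact_lemma[of k "2*k+1"] by (simp add: Suc_diff_le)
        have "\<forall>p\<in>S2. p dvd ((2*k+1) choose k)"
        proof
          fix p assume "p \<in> S2"
          then have p: "prime p" "k + 1 < p" "p \<le> 2*k+1" unfolding S2_def by auto
          have "p dvd (fact (2*k+1) :: nat)" using prime_dvd_fact_iff[OF p(1), of "2*k+1"] p(3) by blast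
          then have "p dvd fact k * fact (k+1) * ((2*k+1) choose k)" using fl by simp
          moreover have "\<not> p dvd (fact k :: nat)" using prime_dvd_fact_iff[OF p(1), of k] p(2) by simp
          moreover have "\<not> p dvd (fact (k+1) :: nat)" using prime_dvd_fact_iff[OF p(1), of "k+1"] p(2) by (simp del: fact_Suc)
          ultimately show "p dvd ((2*k+1) choose k)" using p(1) by (simp add: prime_dvd_mult_iff)
        qed
        then have "\<Prod>S2 dvd ((2*k+1) choose k)"
          by (intro prod_primes_dvd fin2) (auto simp: S2_def)
        then have "\<Prod>S2 \<le> ((2*k+1) choose k)" by (rule dvd_imp_le) simp
        also have "\<dots> \<le> 4 ^ k" by (rule choose_odd_le)
        finally show ?thesis .
      qed
      ultimately have "\<Prod>{p::nat. prime p \<and> p \<le> m} \<le> 4 ^ (k + 1) * 4 ^ k"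
        by (metis mult_le_mono)
      also have "\<dots> = 4 ^ m" unfolding k by (simp add: power_add[symmetric])
      finally show ?thesis .
    qed
  qed
qed

lemma central_lower: "(4::nat) ^ n \<le> (2*n+1) * ((2*n) choose n)"
proof -
  have "(4::nat) ^ n = 2 ^ (2*n)" by (simp add: power_mult)
  also have "\<dots> = (\<Sum>k\<le>2*n. (2*n) choose k)" by (simp add: choose_row_sum)
  also have "\<dots> \<le> (\<Sum>k\<le>2*n. (2*n) choose n)"
    by (rule sum_mono) (metis binomial_maximum nonzero_mult_div_cancel_left zero_neq_numeral)
  also have "\<dots> = (2*n+1) * ((2*n) choose n)" by simp
  finally show ?thesis .
qed

lemma exists_k: "1 \<le> (x::nat) \<Longrightarrow> \<exists>k. 4 ^ k \<le> x \<and> x < 4 ^ Suc k"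
proof (induction x)
  case 0 then show ?case by simp
next
  case (Suc x)
  show ?case
  proof (cases "x = 0")
    case True then show ?thesis by (intro exI[of _ 0]) simp
  next
    case False
    then obtain k where k: "4 ^ k \<le> x" "x < 4 ^ Suc k" using Suc by auto
    show ?thesis
    proof (cases "Suc x < 4 ^ Suc k")
      case True then show ?thesis using k by (intro exI[of _ k]) simp
    next
      case False
      then have "Suc x = 4 ^ Suc k" using k by simp
      then show ?thesis by (intro exI[of _ "Suc k"]) simp
    qed
  qed
qed



function nd :: "nat \<Rightarrow> nat \<Rightarrow> nat \<Rightarrow> bool" where
  "nd p d k = (if k \<le> d then True else p mod d \<noteq> 0 \<and> nd p (d+1) k)"
  by auto
termination by (relation "measure (\<lambda>(p,d,k). k - d)") auto
declare nd.simps[simp del]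
lemma nd_stop: "k \<le> d \<Longrightarrow> nd p d k = True" by (simp add: nd.simps)
lemma nd_step: "d < k \<Longrightarrow> nd p d k = (p mod d \<noteq> 0 \<and> nd p (d+1) k)" by (subst nd.simps) simp

lemma nd_correct: "nd p d k \<Longrightarrow> d \<le> e \<Longrightarrow> e < k \<Longrightarrow> \<not> e dvd p"
proof (induction p d k rule: nd.induct)
  case (1 p d k)
  from 1(3,4) have dk: "d < k" by linarith
  have nd': "p mod d \<noteq> 0 \<and> nd p (d+1) k" using 1(2) unfolding nd_step[OF dk] .
  show ?case
  proof (cases "e = d")
    case True with nd' show ?thesis by (simp add: dvd_eq_mod_eq_0)
  next
    case False
    then have "d + 1 \<le> e" using 1(3) by linarith
    have "\<not> k \<le> d" using dk by linarith
    from 1(1)[OF this] nd' \<open>d + 1 \<le> e\<close> 1(4) show ?thesis by blast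
  qed
qed
lemma prime_by_nd:
  assumes "1 < p" "nd p 2 k" "p < k*k"
  shows "prime p"
proof (rule ccontr)
  assume np: "\<not> prime p"
  then obtain d where d: "d dvd p" "d \<noteq> 1" "d \<noteq> p"
    using assms(1) prime_nat_iff by auto
  then obtain e where e: "p = d * e" by blast
  have "d \<noteq> 0" "e \<noteq> 0" using e assms(1) by (metis less_nat_zero_code mult_is_0)+
  have "e \<noteq> 1" using e d by auto
  have "d \<ge> 2" using \<open>d \<noteq> 0\<close> d(2) by arith
  have "e \<ge> 2" using \<open>e \<noteq> 0\<close> \<open>e \<noteq> 1\<close> by arith
  have "e dvd p" using e by simp
  show False
  proof (cases "d \<le> e")
    case True
    then have "d * d \<le> p" using e by simp
    then have "d < k"
    proof (rule contrapos_pp)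
      assume "\<not> d < k"
      then have "k * k \<le> d * d" by (simp add: mult_le_mono)
      then show "\<not> d * d \<le> p" using assms(3) by linarith
    qed
    then show ?thesis using nd_correct[OF assms(2) \<open>d \<ge> 2\<close>] d by simp
  next
    case False
    then have "e * e \<le> p" using e by simp
    then have "e < k"
    proof (rule contrapos_pp)
      assume "\<not> e < k"
      then have "k * k \<le> e * e" by (simp add: mult_le_mono)
      then show "\<not> e * e \<le> p" using assms(3) by linarith
    qed
    then show ?thesis using nd_correct[OF assms(2) \<open>e \<ge> 2\<close>] \<open>e dvd p\<close> by simp
  qed
qed

lemma chain_primes_small: "prime (2::nat)" "prime (3::nat)" "prime (5::nat)" "prime (7::nat)"
  "prime (13::nat)" "prime (23::nat)" "prime (43::nat)"
  by simp_all

lemma p83: "prime (83::nat)" by (rule prime_by_nd[where k=10]; simp add: nd_stop nd_step)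
lemma p163: "prime (163::nat)" by (rule prime_by_nd[where k=13]; simp add: nd_stop nd_step)
lemma p317: "prime (317::nat)" by (rule prime_by_nd[where k=18]; simp add: nd_stop nd_step)
lemma p631: "prime (631::nat)" by (rule prime_by_nd[where k=26]; simp add: nd_stop nd_step)

lemma p1259: "prime (1259::nat)" by (rule prime_by_nd[where k=36]; simp add: nd_stop nd_step)
lemma p2503: "prime (2503::nat)" by (rule prime_by_nd[where k=51]; simp add: nd_stop nd_step)
lemma p5003: "prime (5003::nat)" by (rule prime_by_nd[where k=71]; simp add: nd_stop nd_step)
lemma p9973: "prime (9973::nat)" by (rule prime_by_nd[where k=100]; simp add: nd_stop nd_step)

lemmas chain_primes = chain_primes_small p83 p163 p317 p631 p1259 p2503 p5003 p9973

lemma bertrand_step: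
  fixes p q n :: nat
  assumes "prime p" "q \<le> n" "n < p" "p \<le> 2 * q"
  shows "\<exists>p. prime p \<and> n < p \<and> p \<le> 2 * n"
  using assms by auto

lemma bertrand_small:
  fixes n :: nat
  assumes "1 \<le> n" "n < 8192"
  shows "\<exists>p. prime p \<and> n < p \<and> p \<le> 2 * n"
proof -
  note S = bertrand_step[OF chain_primes(1), of 1 n] bertrand_step[OF chain_primes(2), of 2 n]
    bertrand_step[OF chain_primes(3), of 3 n] bertrand_step[OF chain_primes(4), of 5 n]
    bertrand_step[OF chain_primes(5), of 7 n] bertrand_step[OF chain_primes(6), of 13 n]
    bertrand_step[OF chain_primes(7), of 23 n] bertrand_step[OF chain_primes(8), of 43 n]
    bertrand_step[OF chain_primes(9), of 83 n] bertrand_step[OF chain_primes(10), of 163 n]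
    bertrand_step[OF chain_primes(11), of 317 n] bertrand_step[OF chain_primes(12), of 631 n]
    bertrand_step[OF chain_primes(13), of 1259 n] bertrand_step[OF chain_primes(14), of 2503 n]
    bertrand_step[OF chain_primes(15), of 5003 n]
  show ?thesis
  proof (cases "n < 2")
    case T0: True
    show ?thesis by (rule S(1)) (use assms(1) T0 in simp_all)
  next
    case F0: False
    show ?thesis
    proof (cases "n < 3")
      case T1: True
      show ?thesis by (rule S(2)) (use F0 T1 in simp_all)
    next
      case F1: False
      show ?thesis
      proof (cases "n < 5")
        case T2: True
        show ?thesis by (rule S(3)) (use F1 T2 in simp_all)
      next
        case F2: False
        show ?thesis
        proof (cases "n < 7")
          case T3: True
          show ?thesis by (rule S(4)) (use F2 T3 in simp_all)
        next
          case F3: False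
          show ?thesis
          proof (cases "n < 13")
            case T4: True
            show ?thesis by (rule S(5)) (use F3 T4 in simp_all)
          next
            case F4: False
            show ?thesis
            proof (cases "n < 23")
              case T5: True
              show ?thesis by (rule S(6)) (use F4 T5 in simp_all)
            next
              case F5: False
              show ?thesis
              proof (cases "n < 43")
                case T6: True
                show ?thesis by (rule S(7)) (use F5 T6 in simp_all)
              next
                case F6: False
                show ?thesis
                proof (cases "n < 83")
                  case T7: True
                  show ?thesis by (rule S(8)) (use F6 T7 in simp_all)
                next
                  case F7: False
                  show ?thesis
                  proof (cases "n < 163")
                    case T8: True
                    show ?thesis by (rule S(9)) (use F7 T8 in simp_all)
                  next
                    case F8: False
                    show ?thesis
                    proof (cases "n < 317")
                      case T9: True
                      show ?thesis by (rule S(10)) (use F8 T9 in simp_all)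
                    next
                      case F9: False
                      show ?thesis
                      proof (cases "n < 631")
                        case T10: True
                        show ?thesis by (rule S(11)) (use F9 T10 in simp_all)
                      next
                        case F10: False
                        show ?thesis
                        proof (cases "n < 1259")
                          case T11: True
                          show ?thesis by (rule S(12)) (use F10 T11 in simp_all)
                        next
                          case F11: False
                          show ?thesis
                          proof (cases "n < 2503")
                            case T12: True
                            show ?thesis by (rule S(13)) (use F11 T12 in simp_all)
                          next
                            case F12: False
                            show ?thesis
                            proof (cases "n < 5003")
                              case T13: True
                              show ?thesis by (rule S(14)) (use F12 T13 in simp_all)
                            next
                              case F13: False
                              show ?thesis by (rule S(15)) (use F13 assms(2) in simp_all)
                            qed
                          qed
                        qed
                      qed
                    qed
                  qed
                qed
              qed
            qed
          qed
        qed
      qed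
    qed
  qed
qed



lemma growth: "7 \<le> k \<Longrightarrow> 12 * (k+1) * (2^k+1) < (4::nat) ^ k"
proof (induction k rule: dec_induct)
  case base then show ?case by simp
next
  case (step k)
  have "12 * (Suc k + 1) * (2 ^ Suc k + 1) \<le> 12 * (2*(k+1)) * (2 * (2^k+1))"
    by (intro mult_le_mono) auto
  also have "\<dots> = 4 * (12 * (k+1) * (2^k+1))" by simp
  also have "\<dots> < 4 * 4 ^ k" using step.IH by simp
  finally show ?case by simp
qed

lemma bertrand_tail:
  fixes n x B k C :: nat
  assumes xd: "x = 2 * n" and x16: "16384 \<le> x" and k: "4 ^ k \<le> x" "x < 4 ^ Suc k"
    and Bd: "B = 2 ^ Suc k" and k7: "7 \<le> k"
    and Cb: "C \<le> x ^ B * 4 ^ (x div 3)" and low: "4 ^ n \<le> (x + 1) * C"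
  shows False
proof -
  have "(x + 1) * C \<le> (x + 1) * (x ^ B * 4 ^ (x div 3))" using Cb by (rule mult_le_mono2)
  with low have L1: "(4::nat) ^ n \<le> (x + 1) * x ^ B * 4 ^ (x div 3)" by (simp only: mult.assoc)
  have "(4::nat) ^ n * 4 ^ (2 * n) = (4 ^ n) ^ 3" by (simp add: power_add[symmetric] power_mult[symmetric])
  also have "\<dots> \<le> ((x + 1) * x ^ B * 4 ^ (x div 3)) ^ 3" using L1 by (rule power_mono) simp
  also have "\<dots> = (x + 1) ^ 3 * x ^ (3 * B) * 4 ^ (3 * (x div 3))"
    by (simp only: power_mult_distrib power_mult[symmetric] mult.commute)
  also have "\<dots> \<le> (x + 1) ^ 3 * x ^ (3 * B) * 4 ^ (2 * n)"
  proof -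
    have "3 * (x div 3) \<le> 2 * n" unfolding xd by simp
    then have "(4::nat) ^ (3 * (x div 3)) \<le> 4 ^ (2 * n)" by (rule power_increasing) simp
    then show ?thesis by (rule mult_le_mono2)
  qed
  finally have "4 ^ n * 4 ^ (2 * n) \<le> ((x + 1) ^ 3 * x ^ (3 * B)) * (4::nat) ^ (2 * n)" by simp
  then have L2: "(4::nat) ^ n \<le> (x + 1) ^ 3 * x ^ (3 * B)" by simp
  have "(x + 1) ^ 3 \<le> (x * x) ^ 3"
  proof (rule power_mono)
    have "x + 1 \<le> x * 2" using x16 by simp
    also have "\<dots> \<le> x * x" using x16 by (intro mult_le_mono2) simp
    finally show "x + 1 \<le> x * x" .
  qed simp
  also have "\<dots> = x ^ 6" by (simp add: power2_eq_square[symmetric] power_mult[symmetric])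
  finally have x6: "(x + 1) ^ 3 \<le> x ^ 6" .
  have "(4::nat) ^ n \<le> x ^ 6 * x ^ (3 * B)"
    using L2 mult_le_mono1[OF x6, of "x ^ (3 * B)"] by linarith
  also have "\<dots> = x ^ (3 * B + 6)" by (simp add: power_add)
  also have "\<dots> \<le> (4 ^ Suc k) ^ (3 * B + 6)" using k(2) by (intro power_mono) simp_all
  also have "\<dots> = 2 ^ ((2 * Suc k) * (3 * B + 6))"
  proof -
    have f: "(4::nat) = 2 ^ 2" by simp
    show ?thesis unfolding f by (simp only: power_mult[symmetric])
  qed
  finally have L3: "(2::nat) ^ x \<le> 2 ^ ((2 * Suc k) * (3 * B + 6))"
    unfolding xd by (simp add: power_mult)
  have "(2::nat) ^ (4 ^ k) \<le> 2 ^ x" using k(1) by (rule power_increasing) simp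
  then have "(2::nat) ^ (4 ^ k) \<le> 2 ^ ((2 * Suc k) * (3 * B + 6))" using L3 by linarith
  then have "(4::nat) ^ k \<le> (2 * Suc k) * (3 * B + 6)" by simp
  also have "\<dots> = 12 * (k + 1) * (2 ^ k + 1)" unfolding Bd by (simp add: algebra_simps)
  finally show False using growth[OF k7] by simp
qed


lemma bertrand_large:
  fixes n :: nat
  assumes n: "8192 \<le> n"
  shows "\<exists>p. prime p \<and> n < p \<and> p \<le> 2 * n"
proof (rule ccontr)
  assume H: "\<not> ?thesis"
  define C where "C = (2*n) choose n"
  define x where "x = 2 * n"
  have Cpos: "C > 0" unfolding C_def by simp
  have x16: "16384 \<le> x" unfolding x_def using n by simp
  obtain k where k: "4 ^ k \<le> x" "x < 4 ^ Suc k" using exists_k[of x] x16 by auto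
  have k7: "7 \<le> k"
  proof (rule ccontr)
    assume "\<not> 7 \<le> k"
    then have "Suc k \<le> 7" by simp
    then have "(4::nat) ^ Suc k \<le> 4 ^ 7" by (rule power_increasing) simp
    then show False using k(2) x16 by simp
  qed
  define B where "B = (2::nat) ^ Suc k"
  have BB: "B * B = 4 ^ Suc k" unfolding B_def by (simp add: power_mult_distrib[symmetric])
  define PF where "PF = prime_factors C"
  have finPF: "finite PF" unfolding PF_def by simp
  have PFprops: "prime p \<and> 3 * p \<le> x \<and> 0 < multiplicity p C" if "p \<in> PF" for p
  proof -
    have pp: "prime p" "p dvd C" using that unfolding PF_def by auto
    have mpos: "0 < multiplicity p C"
      using pp Cpos by (simp add: prime_multiplicity_gt_zero_iff)
    have "C dvd fact (2*n)"
      unfolding C_def using binomial_fact_lemma[of n "2*n"]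
      by (metis dvd_triv_right le_add2 mult_2)
    then have "p dvd fact (2*n)" using pp(2) dvd_trans by blast
    then have "p \<le> 2 * n" using prime_dvd_fact_iff[OF pp(1)] by blast
    then have "p \<le> n" using H pp(1) by (meson not_le)
    have "\<not> 2 * n < 3 * p"
    proof
      assume "2 * n < 3 * p"
      then have "multiplicity p C = 0" unfolding C_def
        by (rule mult_central_zero[OF pp(1) \<open>p \<le> n\<close>]) (use n in simp)
      then show False using mpos by simp
    qed
    then show ?thesis using pp(1) mpos unfolding x_def by simp
  qed
  have vbound: "p ^ multiplicity p C \<le> x" if "p \<in> PF" for p
    unfolding C_def x_def
    by (rule mult_central_bound) (use PFprops[OF that] n in auto)
  have "C = (\<Prod>p\<in>PF. p ^ multiplicity p C)"
    unfolding PF_def using prime_factorization_nat[OF Cpos] .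
  also have "\<dots> = (\<Prod>p\<in>PF \<inter> {..<B}. p ^ multiplicity p C) * (\<Prod>p\<in>PF - {..<B}. p ^ multiplicity p C)"
    by (rule prod.Int_Diff[OF finPF])
  also have "\<dots> \<le> x ^ B * 4 ^ (x div 3)"
  proof (rule mult_le_mono)
    have "(\<Prod>p\<in>PF \<inter> {..<B}. p ^ multiplicity p C) \<le> (\<Prod>p\<in>PF \<inter> {..<B}. x)"
      by (rule prod_mono) (use vbound in auto)
    also have "\<dots> = x ^ card (PF \<inter> {..<B})" by simp
    also have "\<dots> \<le> x ^ B"
    proof (rule power_increasing)
      have "card (PF \<inter> {..<B}) \<le> card {..<B}" by (rule card_mono) auto
      then show "card (PF \<inter> {..<B}) \<le> B" by simp
    qed (use x16 in simp)
    finally show "(\<Prod>p\<in>PF \<inter> {..<B}. p ^ multiplicity p C) \<le> x ^ B" .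
  next
    have "(\<Prod>p\<in>PF - {..<B}. p ^ multiplicity p C) \<le> (\<Prod>p\<in>PF - {..<B}. p)"
    proof (rule prod_mono)
      fix p assume p: "p \<in> PF - {..<B}"
      then have "B \<le> p" by simp
      have "p ^ multiplicity p C \<le> x" using vbound p by simp
      also have "\<dots> < B * B" using k(2) BB by simp
      also have "\<dots> \<le> p * p" using \<open>B \<le> p\<close> by (simp add: mult_le_mono)
      finally have "p ^ multiplicity p C < p ^ 2" by (simp add: power2_eq_square)
      have p1: "1 < p" using PFprops[of p] p prime_gt_1_nat by simp
      have "multiplicity p C < 2"
        using \<open>p ^ multiplicity p C < p ^ 2\<close> power_strict_increasing_iff[OF p1] by blast
      then have "multiplicity p C \<le> 1" by simp
      then have "p ^ multiplicity p C \<le> p ^ 1"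
        by (rule power_increasing) (use p1 in simp)
      then show "0 \<le> p ^ multiplicity p C \<and> p ^ multiplicity p C \<le> p" by simp
    qed
    also have "\<dots> \<le> \<Prod>{p::nat. prime p \<and> p \<le> x div 3}"
    proof (rule dvd_imp_le)
      show "\<Prod>(PF - {..<B}) dvd \<Prod>{p::nat. prime p \<and> p \<le> x div 3}"
      proof (rule prod_dvd_prod_subset)
        show "finite {p::nat. prime p \<and> p \<le> x div 3}"
          by (rule finite_subset[of _ "{..x div 3}"]) auto
        show "PF - {..<B} \<subseteq> {p::nat. prime p \<and> p \<le> x div 3}"
        proof
          fix p assume "p \<in> PF - {..<B}"
          then have pp: "prime p" "3 * p \<le> x" using PFprops by auto
          have "(3 * p) div 3 \<le> x div 3" using pp(2) by (rule div_le_mono)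
          then show "p \<in> {p::nat. prime p \<and> p \<le> x div 3}" using pp(1) by simp
        qed
      qed
      show "0 < \<Prod>{p::nat. prime p \<and> p \<le> x div 3}"
        by (rule prod_pos) (use prime_gt_0_nat in auto)
    qed
    also have "\<dots> \<le> 4 ^ (x div 3)" by (rule primorial_le)
    finally show "(\<Prod>p\<in>PF - {..<B}. p ^ multiplicity p C) \<le> 4 ^ (x div 3)" .
  qed
  finally have Cb: "C \<le> x ^ B * 4 ^ (x div 3)" .
  have low: "(4::nat) ^ n \<le> (x + 1) * C" using central_lower[of n] unfolding C_def x_def by simp
  show False by (rule bertrand_tail[OF x_def x16 k B_def k7 Cb low])
qed

theorem bertrand:
  fixes n :: nat
  assumes "1 \<le> n"
  shows "\<exists>p. prime p \<and> n < p \<and> p \<le> 2 * n"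
proof (cases "n < 8192")
  case True then show ?thesis using bertrand_small assms by blast
next
  case False then show ?thesis using bertrand_large by simp
qed



lemma pow_fact_le_exp:
  fixes x :: real
  assumes "0 \<le> x"
  shows "x ^ n / fact n \<le> exp x"
proof -
  have s: "(\<lambda>m. x ^ m /\<^sub>R fact m) sums exp x" by (rule exp_converges)
  have "(\<Sum>m\<in>{n}. x ^ m /\<^sub>R fact m) \<le> (\<Sum>m. x ^ m /\<^sub>R fact m)"
    by (rule sum_le_suminf) (use s assms in \<open>auto simp: sums_iff\<close>)
  also have "\<dots> = exp x" using s by (simp add: sums_iff)
  finally show ?thesis by (simp add: divide_inverse mult.commute)
qed

lemma ln_fact_lower:
  fixes A :: nat
  assumes "A \<ge> 1"
  shows "real A * ln (real A) - real A \<le> ln (fact A)"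
proof -
  have pos: "0 < real A" using assms by simp
  have "real A ^ A / fact A \<le> exp (real A)" by (rule pow_fact_le_exp) simp
  then have "ln (real A ^ A / fact A) \<le> ln (exp (real A))"
    using pos by (subst ln_le_cancel_iff) auto
  also have "ln (real A ^ A / fact A) = real A * ln (real A) - ln (fact A)"
    using pos by (simp add: ln_div ln_realpow)
  finally show ?thesis by simp
qed

lemma fact_split: "fact (m + k) = (fact m * Delta (m + 1) k :: nat)"
proof (induction k)
  case 0 then show ?case by (simp add: Delta_def)
next
  case (Suc k)
  have "fact (m + Suc k) = (m + k + 1) * (fact (m + k) :: nat)" by simp
  also have "\<dots> = fact m * (Delta (m + 1) k * (m + 1 + k))" using Suc by (simp add: algebra_simps)
  also have "Delta (m + 1) k * (m + 1 + k) = Delta (m + 1) (Suc k)" by (simp add: Delta_def)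
  finally show ?case .
qed

lemma Delta_le:
  assumes "\<And>j. j < k \<Longrightarrow> m + j \<le> M"
  shows "Delta m k \<le> M ^ k"
proof -
  have "Delta m k \<le> (\<Prod>j<k. M)" unfolding Delta_def
    by (rule prod_mono) (use assms in auto)
  then show ?thesis by simp
qed

theorem lemma2p2:
  fixes t :: nat and a :: "nat \<Rightarrow> nat" and n1 n2 i :: nat
  assumes "t \<ge> 3"
    and "\<And>l l'. 1 \<le> l \<Longrightarrow> l \<le> l' \<Longrightarrow> l' \<le> t \<Longrightarrow> a l' \<le> a l"
    and "a t \<ge> 2"
    and "n1 \<ge> n2" and "n2 \<ge> 2"
    and "\<And>l. 1 \<le> l \<Longrightarrow> l \<le> t \<Longrightarrow> a l \<noteq> n1 \<and> a l \<noteq> n2"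
    and "(\<Prod>l=1..t. fact (a l)) = (fact n1 * fact n2 :: nat)"
    and "n1 > a 1"
    and "2 \<le> i" and "i \<le> t" and "n2 > a i"
  shows "(\<Prod>l\<in>{1..t} - {1, i}. fact (a l)) =
           Delta (a 1 + 1) (n1 - a 1) * (Delta (a i + 1) (n2 - a i) :: nat)
       \<and> (\<forall>j < n1 - a 1. \<not> prime (a 1 + 1 + j))
       \<and> (let A = Max (a ` ({1..t} - {1, i})) in
            real A * ln (real A) - real A \<le> ln (fact A)
          \<and> ln (fact A) \<le> real ((n1 - a 1) + (n2 - a i)) * ln (2 * real (a 1 + 1)))"
proof -
  define S where "S = {1..t} - {1, i}"
  define R where "R = (\<Prod>l\<in>S. fact (a l) :: nat)"
  define D1 where "D1 = Delta (a 1 + 1) (n1 - a 1)"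
  define D2 where "D2 = Delta (a i + 1) (n2 - a i)"
  have amax: "a l \<le> a 1" if "1 \<le> l" "l \<le> t" for l using assms(2)[of 1 l] that by simp
  have at_le: "a t \<le> a l" if "1 \<le> l" "l \<le> t" for l using assms(2)[of l t] that by simp
  have finS: "finite S" unfolding S_def by simp
  have Sdecomp: "{1..t} = insert 1 (insert i S)" unfolding S_def using assms(9,10) by auto
  have "(\<Prod>l=1..t. fact (a l) :: nat) = fact (a 1) * (fact (a i) * R)"
    unfolding Sdecomp R_def using finS assms(9) by (simp add: S_def)
  moreover have "fact n1 = (fact (a 1) * D1 :: nat)"
    unfolding D1_def using fact_split[of "a 1" "n1 - a 1"] assms(8) by simp
  moreover have "fact n2 = (fact (a i) * D2 :: nat)"
    unfolding D2_def using fact_split[of "a i" "n2 - a i"] assms(11) by simp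
  ultimately have "fact (a 1) * (fact (a i) * R) = fact (a 1) * (fact (a i) * (D1 * D2) :: nat)"
    using assms(7) by (simp add: algebra_simps)
  then have P1: "R = D1 * D2" by simp
  have P2: "\<forall>j < n1 - a 1. \<not> prime (a 1 + 1 + j)"
  proof (intro allI impI notI)
    fix j assume j: "j < n1 - a 1" and pr: "prime (a 1 + 1 + j)"
    let ?q = "a 1 + 1 + j"
    have "?q \<le> n1" using j by simp
    then have "?q dvd (fact n1 :: nat)" using prime_dvd_fact_iff[OF pr] by blast
    then have "?q dvd (\<Prod>l=1..t. fact (a l) :: nat)" using assms(7) by simp
    then obtain l where l: "l \<in> {1..t}" "?q dvd (fact (a l) :: nat)"
      using prime_dvd_prod_iff[OF finite_atLeastAtMost[of 1 t] pr, of "\<lambda>l. fact (a l)"] by blast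
    then have "?q \<le> a l" using prime_dvd_fact_iff[OF pr] by blast
    moreover have "a l \<le> a 1" using amax l(1) by simp
    ultimately show False by simp
  qed
  have a1ge: "a 1 \<ge> 2" using at_le[of 1] assms(1,3) by simp
  obtain q where q: "prime q" "a 1 < q" "q \<le> 2 * a 1" using bertrand[of "a 1"] a1ge by auto
  have n1lt: "n1 < 2 * a 1"
  proof (rule ccontr)
    assume "\<not> n1 < 2 * a 1"
    then have "q - a 1 - 1 < n1 - a 1" using q by simp
    moreover have "a 1 + 1 + (q - a 1 - 1) = q" using q by simp
    ultimately show False using P2 q(1) by metis
  qed
  define M where "M = 2 * (a 1 + 1)"
  have D1le: "D1 \<le> M ^ (n1 - a 1)" unfolding D1_def
    by (rule Delta_le) (use n1lt in \<open>simp add: M_def\<close>)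
  have D2le: "D2 \<le> M ^ (n2 - a i)" unfolding D2_def
    by (rule Delta_le) (use n1lt assms(4,11) in \<open>simp add: M_def\<close>)
  have Rle: "R \<le> M ^ ((n1 - a 1) + (n2 - a i))"
    unfolding P1 power_add by (rule mult_le_mono[OF D1le D2le])
  define l0 where "l0 = (if i = 2 then 3 else 2::nat)"
  have l0S: "l0 \<in> S" unfolding S_def l0_def using assms(1,9,10) by auto
  define A where "A = Max (a ` S)"
  have AinS: "A \<in> a ` S" unfolding A_def using finS l0S by (intro Max_in) auto
  then obtain l1 where l1: "l1 \<in> S" "A = a l1" by auto
  have A2: "A \<ge> 2" using l1 at_le[of l1] assms(3) unfolding S_def by auto
  have "fact A dvd R" unfolding R_def l1(2) by (rule dvd_prodI[OF finS l1(1)])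
  then have "fact A \<le> R" by (rule dvd_imp_le) (unfold R_def, rule prod_pos, simp)
  then have factA: "fact A \<le> M ^ ((n1 - a 1) + (n2 - a i))" using Rle by linarith
  have Mpos: "0 < real M" unfolding M_def by simp
  have "ln (fact A :: real) \<le> ln (real M ^ ((n1 - a 1) + (n2 - a i)))"
  proof (subst ln_le_cancel_iff)
    show "(0::real) < fact A" by simp
    show "0 < real M ^ (n1 - a 1 + (n2 - a i))" using Mpos by simp
    have "real (fact A) \<le> real (M ^ ((n1 - a 1) + (n2 - a i)))" using factA by (rule of_nat_mono)
    then show "(fact A :: real) \<le> real M ^ (n1 - a 1 + (n2 - a i))" by simp
  qed
  also have "\<dots> = real ((n1 - a 1) + (n2 - a i)) * ln (2 * real (a 1 + 1))"
    using Mpos by (simp add: ln_realpow M_def)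
  finally have P3b: "ln (fact A :: real) \<le> real ((n1 - a 1) + (n2 - a i)) * ln (2 * real (a 1 + 1))" .
  have P3a: "real A * ln (real A) - real A \<le> ln (fact A)" by (rule ln_fact_lower) (use A2 in simp)
  show ?thesis
    using P1 P2 P3a P3b unfolding R_def D1_def D2_def S_def A_def Let_def by simp
qed


end
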